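(* Let $I$ be a non-empty upward directed set with no maximal element. For $\alpha\in I$ let $E_\alpha$ be the set of tuples $(\alpha_1,\alpha_2,\dots,\alpha_{2n-1},\alpha_{2n})$ ($n\ge1$) of elements of $I$ such that (i) $\alpha_{2n-1}=\alpha$; (ii) $\alpha_{2i-1}\le\alpha_{2i}$ for all $1\le i\le n$; (iii) $\alpha_{2i-1}\not\le\alpha_{2j-1}$ for all $1\le j<i\le n$. For $\alpha\le\beta$ and $(\beta_1,\dots,\beta_{2m})\in E_\beta$, let $j$ be the smallest index with $\alpha\le\beta_{2j-1}$ and set $\epsilon_{\alpha\beta}(\beta_1,\dots,\beta_{2m})=(\beta_1,\dots,\beta_{2j-2},\alpha,\beta_{2j})$. Then each $E_\alpha$ is non-empty, $\epsilon_{\alpha\beta}$ is a well-defined map $E_\beta\to E_\alpha$, $\{E_\alpha,\epsilon_{\alpha\beta}\}$ is an $I$-inverse system, and every $\epsilon_{\alpha\beta}$ is surjective.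
   Context: An $I$-inverse system consists of sets $E_\alpha$ ($\alpha\in I$) and maps $\epsilon_{\alpha\beta}:E_\beta\to E_\alpha$ for $\alpha\le\beta$ with $\epsilon_{\alpha\alpha}=\mathrm{id}$ and $\epsilon_{\alpha\beta}\epsilon_{\beta\gamma}=\epsilon_{\alpha\gamma}$. *)

theory Defs
  imports Main
begin

definition directed_set :: "'a set \<Rightarrow> ('a \<Rightarrow> 'a \<Rightarrow> bool) \<Rightarrow> bool" where
  "directed_set I le \<longleftrightarrow> I \<noteq> {}
     \<and> (\<forall>a\<in>I. le a a)
     \<and> (\<forall>a\<in>I. \<forall>b\<in>I. \<forall>c\<in>I. le a b \<longrightarrow> le b c \<longrightarrow> le a c)
     \<and> (\<forall>a\<in>I. \<forall>b\<in>I. \<exists>c\<in>I. le a c \<and> le b c)"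

definition no_maximal :: "'a set \<Rightarrow> ('a \<Rightarrow> 'a \<Rightarrow> bool) \<Rightarrow> bool" where
  "no_maximal I le \<longleftrightarrow> (\<forall>a\<in>I. \<exists>b\<in>I. le a b \<and> \<not> le b a)"

definition inverse_system :: "'a set \<Rightarrow> ('a \<Rightarrow> 'a \<Rightarrow> bool) \<Rightarrow> ('a \<Rightarrow> 'e set)
     \<Rightarrow> ('a \<Rightarrow> 'a \<Rightarrow> 'e \<Rightarrow> 'e) \<Rightarrow> bool" where
  "inverse_system I le E e \<longleftrightarrow>
     (\<forall>a\<in>I. \<forall>b\<in>I. le a b \<longrightarrow> (\<forall>x\<in>E b. e a b x \<in> E a))
   \<and> (\<forall>a\<in>I. \<forall>x\<in>E a. e a a x = x)
   \<and> (\<forall>a\<in>I. \<forall>b\<in>I. \<forall>c\<in>I. le a b \<longrightarrow> le b c \<longrightarrow>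
        (\<forall>x\<in>E c. e a b (e b c x) = e a c x))"

text \<open>Tuples (a_1,...,a_{2n}) are lists xs of length 2n (n \<ge> 1), 0-indexed:
  a_{2i-1} = xs!(2(i-1)), a_{2i} = xs!(2(i-1)+1).\<close>
definition Etup :: "'a set \<Rightarrow> ('a \<Rightarrow> 'a \<Rightarrow> bool) \<Rightarrow> 'a \<Rightarrow> 'a list set" where
  "Etup I le a = {xs. even (length xs) \<and> length xs \<ge> 2 \<and> set xs \<subseteq> I
      \<and> xs ! (length xs - 2) = a
      \<and> (\<forall>i < length xs div 2. le (xs ! (2*i)) (xs ! (2*i+1)))
      \<and> (\<forall>i < length xs div 2. \<forall>j < i. \<not> le (xs ! (2*i)) (xs ! (2*j)))}"

definition eps :: "('a \<Rightarrow> 'a \<Rightarrow> bool) \<Rightarrow> 'a \<Rightarrow> 'a \<Rightarrow> 'a list \<Rightarrow> 'a list" where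
  "eps le a b ys = (let j = (LEAST j. le a (ys ! (2*j))) in take (2*j) ys @ [a, ys ! (2*j+1)])"

end

theory Submission
  imports Defs
begin

lemma eps_eq:
  assumes "le a (ys!(2*j))" "\<And>k. k<j \<Longrightarrow> \<not> le a (ys!(2*k))"
  shows "eps le a b ys = take (2*j) ys @ [a, ys!(2*j+1)]"
proof -
  have "(LEAST j. le a (ys ! (2*j))) = j"
    by (rule Least_equality, rule assms(1), metis assms(2) not_less)
  thus ?thesis unfolding eps_def Let_def by simp
qed

lemma last_pair:
  assumes "length xs = 2*n" "n \<ge> 1"
  shows "take (2*n-2) xs @ [xs!(2*n-2), xs!(2*n-1)] = xs"
proof -
  have "xs = take (2*n) xs" using assms by simp
  also have "\<dots> = take (2*n-1) xs @ [xs!(2*n-1)]"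
    using assms take_Suc_conv_app_nth[of "2*n-1" xs] by (simp add: Suc_diff_Suc)
  also have "take (2*n-1) xs = take (2*n-2) xs @ [xs!(2*n-2)]"
    using assms take_Suc_conv_app_nth[of "2*n-2" xs] by (simp add: Suc_diff_Suc numeral_2_eq_2)
  finally show ?thesis by simp
qed

lemma nth_tp:
  assumes "2*j+1 < length ys" "m < 2*j+2"
  shows "(take (2*j) ys @ [x,y]) ! m = (if m < 2*j then ys!m else if m = 2*j then x else y)"
  using assms by (auto simp: nth_append)

lemma Etup_memD:
  assumes "xs \<in> Etup I le a"
  obtains n where "length xs = 2*n" "n \<ge> 1" "set xs \<subseteq> I" "xs!(2*(n-1)) = a"
    "\<And>i. i < n \<Longrightarrow> le (xs!(2*i)) (xs!(2*i+1))"
    "\<And>i j. i < n \<Longrightarrow> j < i \<Longrightarrow> \<not> le (xs!(2*i)) (xs!(2*j))"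
proof -
  from assms have e: "even (length xs)" "length xs \<ge> 2" by (auto simp: Etup_def)
  then obtain n where n: "length xs = 2*n" by auto
  with e have "n \<ge> 1" by auto
  moreover have "2*(n-1) = length xs - 2" using n by auto
  ultimately show ?thesis using that assms n by (auto simp: Etup_def)
qed

lemma Etup_memI:
  assumes "length xs = 2*n" "n \<ge> 1" "set xs \<subseteq> I" "xs!(2*(n-1)) = a"
    "\<And>i. i < n \<Longrightarrow> le (xs!(2*i)) (xs!(2*i+1))"
    "\<And>i j. i < n \<Longrightarrow> j < i \<Longrightarrow> \<not> le (xs!(2*i)) (xs!(2*j))"
  shows "xs \<in> Etup I le a"
proof -
  have "2*(n-1) = length xs - 2" using assms by auto
  thus ?thesis using assms by (auto simp: Etup_def)
qed

theorem mainTheorem3: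
  fixes I :: "'a set" and le :: "'a \<Rightarrow> 'a \<Rightarrow> bool"
  assumes "directed_set I le" and "no_maximal I le"
  shows "(\<forall>a\<in>I. Etup I le a \<noteq> {})
    \<and> (\<forall>a\<in>I. \<forall>b\<in>I. le a b \<longrightarrow> (\<forall>ys\<in>Etup I le b.
          (\<exists>j < length ys div 2. le a (ys ! (2*j))) \<and> eps le a b ys \<in> Etup I le a))
    \<and> inverse_system I le (Etup I le) (eps le)
    \<and> (\<forall>a\<in>I. \<forall>b\<in>I. le a b \<longrightarrow> eps le a b ` Etup I le b = Etup I le a)"
proof -
  have refl: "\<And>a. a \<in> I \<Longrightarrow> le a a" using assms(1) by (auto simp: directed_set_def)
  have trans: "\<And>a b c. a \<in> I \<Longrightarrow> b \<in> I \<Longrightarrow> c \<in> I \<Longrightarrow> le a b \<Longrightarrow> le b c \<Longrightarrow> le a c"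
    using assms(1) unfolding directed_set_def by blast
  have inI: "\<And>xs k. set xs \<subseteq> I \<Longrightarrow> k < length xs \<Longrightarrow> xs!k \<in> I"
    by (meson nth_mem subsetD)
  have struct: "\<exists>j < length ys div 2. le a (ys!(2*j)) \<and> (\<forall>k<j. \<not> le a (ys!(2*k)))
       \<and> eps le a b ys = take (2*j) ys @ [a, ys!(2*j+1)]"
    if h: "a \<in> I" "b \<in> I" "le a b" "ys \<in> Etup I le b" for a b ys
  proof -
    obtain n where n: "length ys = 2*n" "n \<ge> 1" "set ys \<subseteq> I" "ys!(2*(n-1)) = b"
      using Etup_memD[OF h(4)] by metis
    have ex: "le a (ys!(2*(n-1)))" using n h by simp
    define j where "j = (LEAST j. le a (ys!(2*j)))"
    have "j \<le> n-1" unfolding j_def by (rule Least_le, rule ex)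
    moreover have "le a (ys!(2*j))" unfolding j_def by (rule LeastI, rule ex)
    moreover have "\<forall>k<j. \<not> le a (ys!(2*k))" unfolding j_def using not_less_Least by blast
    ultimately show ?thesis using n
      by (intro exI[of _ j]) (auto simp: eps_eq)
  qed
  have wd: "eps le a b ys \<in> Etup I le a"
    if ab: "a \<in> I" "b \<in> I" "le a b" "ys \<in> Etup I le b" for a b ys
  proof -
    obtain n where n: "length ys = 2*n" "n \<ge> 1" "set ys \<subseteq> I" "ys!(2*(n-1)) = b"
      "\<And>i. i < n \<Longrightarrow> le (ys!(2*i)) (ys!(2*i+1))"
      "\<And>i j. i < n \<Longrightarrow> j < i \<Longrightarrow> \<not> le (ys!(2*i)) (ys!(2*j))"
      using Etup_memD[OF ab(4)] by metis
    obtain j where j: "j < length ys div 2" "le a (ys!(2*j))" "\<forall>k<j. \<not> le a (ys!(2*k))"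
       "eps le a b ys = take (2*j) ys @ [a, ys!(2*j+1)]"
      using struct[OF ab] by blast
    have jn: "j < n" "2*j+1 < length ys" using j n by auto
    note nt = nth_tp[OF jn(2)]
    show ?thesis unfolding j(4)
    proof (rule Etup_memI[where n="Suc j"])
      show "length (take (2 * j) ys @ [a, ys ! (2 * j + 1)]) = 2 * Suc j" using jn by simp
      show "set (take (2 * j) ys @ [a, ys ! (2 * j + 1)]) \<subseteq> I"
        using n(3) ab(1) inI[OF n(3) jn(2)] set_take_subset[of "2*j" ys] by auto
      show "(take (2 * j) ys @ [a, ys ! (2 * j + 1)]) ! (2 * (Suc j - 1)) = a" using nt by simp
    next
      fix i assume i: "i < Suc j"
      show "le ((take (2 * j) ys @ [a, ys ! (2 * j + 1)]) ! (2 * i))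
                ((take (2 * j) ys @ [a, ys ! (2 * j + 1)]) ! (2 * i + 1))"
      proof (cases "i < j")
        case True thus ?thesis using nt n(5)[of i] jn by simp
      next
        case False
        hence "i = j" using i by simp
        moreover have "le a (ys!(2*j+1))"
          using trans[OF ab(1) inI[OF n(3), of "2*j"] inI[OF n(3) jn(2)] j(2) n(5)[OF jn(1)]] jn by simp
        ultimately show ?thesis using nt by simp
      qed
    next
      fix i k assume i: "i < Suc j" "k < i"
      show "\<not> le ((take (2 * j) ys @ [a, ys ! (2 * j + 1)]) ! (2 * i))
                ((take (2 * j) ys @ [a, ys ! (2 * j + 1)]) ! (2 * k))"
      proof (cases "i < j")
        case True thus ?thesis using nt n(6)[of i k] jn i by simp
      next
        case False
        hence "i = j" using i by simp
        thus ?thesis using nt j(3) i by simp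
      qed
    qed simp
  qed
  have idt: "eps le a a x = x" if h: "a \<in> I" "x \<in> Etup I le a" for a x
  proof -
    obtain n where n: "length x = 2*n" "n \<ge> 1" "set x \<subseteq> I" "x!(2*(n-1)) = a"
      "\<And>i j. i < n \<Longrightarrow> j < i \<Longrightarrow> \<not> le (x!(2*i)) (x!(2*j))"
      using Etup_memD[OF h(2)] by metis
    have "eps le a a x = take (2*(n-1)) x @ [a, x!(2*(n-1)+1)]"
      by (rule eps_eq) (use n refl[OF h(1)] n(5)[of "n-1"] in auto)
    also have "\<dots> = x" using last_pair[OF n(1,2)] n(2,4)
      by (simp add: right_diff_distrib' numeral_2_eq_2 Suc_diff_Suc)
    finally show ?thesis .
  qed
  have comp: "eps le a b (eps le b c x) = eps le a c x"
    if abc: "a \<in> I" "b \<in> I" "c \<in> I" "le a b" "le b c" "x \<in> Etup I le c" for a b c x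
  proof -
    obtain n where n: "length x = 2*n" "n \<ge> 1" "set x \<subseteq> I"
      using Etup_memD[OF abc(6)] by metis
    obtain j where j: "j < length x div 2" "le b (x!(2*j))" "\<forall>k<j. \<not> le b (x!(2*k))"
       "eps le b c x = take (2*j) x @ [b, x!(2*j+1)]"
      using struct[OF abc(2,3,5,6)] by blast
    have lac: "le a c" using trans[OF abc(1-5)] .
    obtain j' where j': "j' < length x div 2" "le a (x!(2*j'))" "\<forall>k<j'. \<not> le a (x!(2*k))"
       "eps le a c x = take (2*j') x @ [a, x!(2*j'+1)]"
      using struct[OF abc(1,3) lac abc(6)] by blast
    have jl: "2*j+1 < length x" using j n by auto
    have "le a (x!(2*j))" using trans[OF abc(1,2) inI[OF n(3), of "2*j"] abc(4) j(2)] jl by simp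
    hence jj: "j' \<le> j" using j'(3) not_less by blast
    note nt = nth_tp[OF jl]
    have "eps le a b (eps le b c x) = take (2*j') (eps le b c x) @ [a, (eps le b c x)!(2*j'+1)]"
    proof (rule eps_eq)
      show "le a (eps le b c x ! (2 * j'))"
        using jj j'(2) abc(4) unfolding j(4) using nt jl by (cases "j' = j") (auto simp: nt)
      show "\<not> le a (eps le b c x ! (2 * k))" if "k < j'" for k
        using that jj j'(3) unfolding j(4) using jl by (auto simp: nt)
    qed
    also have "\<dots> = eps le a c x" unfolding j'(4) j(4) using jj jl nt
      by (cases "j' = j") (auto simp: min_def)
    finally show ?thesis .
  qed
  have surj: "x \<in> eps le a b ` Etup I le b"
    if ab: "a \<in> I" "b \<in> I" "le a b" "x \<in> Etup I le a" for a b x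
  proof -
    obtain n where n: "length x = 2*n" "n \<ge> 1" "set x \<subseteq> I" "x!(2*(n-1)) = a"
      "\<And>i. i < n \<Longrightarrow> le (x!(2*i)) (x!(2*i+1))"
      "\<And>i j. i < n \<Longrightarrow> j < i \<Longrightarrow> \<not> le (x!(2*i)) (x!(2*j))"
      using Etup_memD[OF ab(4)] by metis
    have nota: "\<not> le a (x!(2*k))" if "k < n-1" for k using n(6)[of "n-1" k] n that by auto
    have lp: "take (2*(n-1)) x @ [x!(2*(n-1)), x!(2*(n-1)+1)] = x" using last_pair[OF n(1,2)] n(2)
      by (simp add: right_diff_distrib' numeral_2_eq_2 Suc_diff_Suc)
    show ?thesis
    proof (cases "le b a")
      case True
      define ys where "ys = x[2*(n-1) := b]"
      have len: "length ys = 2*n" unfolding ys_def using n by simp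
      have yk: "ys!k = (if k = 2*(n-1) then b else x!k)" if "k < 2*n" for k
        unfolding ys_def using that n by auto
      have "ys \<in> Etup I le b"
      proof (rule Etup_memI[OF len n(2)])
        show "set ys \<subseteq> I" unfolding ys_def using n(3) ab(2) set_update_subset_insert by fastforce
        show "ys ! (2 * (n - 1)) = b" using yk n by simp
      next
        fix i assume i: "i < n"
        show "le (ys ! (2 * i)) (ys ! (2 * i + 1))"
        proof (cases "i = n-1")
          case True
          have "le a (x!(2*i+1))" using n(4) n(5)[OF i] True by simp
          hence "le b (x!(2*i+1))" using trans[OF ab(2,1) inI[OF n(3), of "2*i+1"] \<open>le b a\<close>] i n by simp
          thus ?thesis using yk i True by simp
        next
          case False thus ?thesis using yk i n(5)[OF i] by simp
        qed
      next
        fix i k assume i: "i < n" "k < i"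
        show "\<not> le (ys ! (2 * i)) (ys ! (2 * k))"
        proof (cases "i = n-1")
          case True
          have "\<not> le b (x!(2*k))"
            using trans[OF ab(1,2) inI[OF n(3), of "2*k"] ab(3)] nota[of k] i True n by auto
          thus ?thesis using yk i True by simp
        next
          case False thus ?thesis using yk i n(6)[OF i] by auto
        qed
      qed
      moreover have "eps le a b ys = x"
      proof -
        have "eps le a b ys = take (2*(n-1)) ys @ [a, ys!(2*(n-1)+1)]"
          by (rule eps_eq) (use yk n nota ab(3) in auto)
        also have "\<dots> = x" using lp n yk[of "2*(n-1)+1"] unfolding ys_def by simp
        finally show ?thesis .
      qed
      ultimately show ?thesis by blast
    next
      case False
      define ys where "ys = x @ [b, b]"
      have len: "length ys = 2*Suc n" unfolding ys_def using n by simp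
      have yk: "ys!k = (if k < 2*n then x!k else b)" if "k < 2*n+2" for k
        unfolding ys_def using that n by (auto simp: nth_append nth_Cons')
      have "ys \<in> Etup I le b"
      proof (rule Etup_memI[OF len])
        show "set ys \<subseteq> I" unfolding ys_def using n(3) ab(2) by auto
        show "ys ! (2 * (Suc n - 1)) = b" using yk by simp
      next
        fix i assume i: "i < Suc n"
        show "le (ys ! (2 * i)) (ys ! (2 * i + 1))"
          using yk i n(5)[of i] refl[OF ab(2)] by (cases "i = n") auto
      next
        fix i k assume i: "i < Suc n" "k < i"
        show "\<not> le (ys ! (2 * i)) (ys ! (2 * k))"
        proof (cases "i = n")
          case True
          have "\<not> le b (x!(2*k))"
          proof
            assume h: "le b (x!(2*k))"
            show False
            proof (cases "k = n-1")
              case True thus False using h n(4) False by simp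
            next
              case False
              hence "k < n-1" using i True by simp
              thus False using trans[OF ab(1,2) inI[OF n(3), of "2*k"] ab(3) h] nota n i True by auto
            qed
          qed
          thus ?thesis using yk i True by simp
        next
          case False thus ?thesis using yk i n(6)[of i k] by simp
        qed
      qed simp
      moreover have "eps le a b ys = x"
      proof -
        have "eps le a b ys = take (2*(n-1)) ys @ [a, ys!(2*(n-1)+1)]"
          by (rule eps_eq) (use yk n nota refl[OF ab(1)] in auto)
        also have "\<dots> = take (2*(n-1)) x @ [a, x!(2*(n-1)+1)]"
        proof -
          have "2*(n-1)+1 < 2*n" "2*(n-1) \<le> length x" using n by arith+
          thus ?thesis unfolding ys_def by (simp add: nth_append n(1))
        qed
        also have "\<dots> = x" using lp n by simp
        finally show ?thesis .
      qed
      ultimately show ?thesis by blast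
    qed
  qed
  have ne: "Etup I le a \<noteq> {}" if "a \<in> I" for a
  proof -
    have "[a,a] \<in> Etup I le a" by (rule Etup_memI[where n=1]) (use that refl in auto)
    thus ?thesis by blast
  qed
  show ?thesis
  proof (intro conjI ballI impI)
    show "inverse_system I le (Etup I le) (eps le)"
      unfolding inverse_system_def using wd idt comp by blast
  next
    fix a b ys assume "a \<in> I" "b \<in> I" "le a b" "ys \<in> Etup I le b"
    thus "\<exists>j<length ys div 2. le a (ys ! (2 * j))" using struct by blast
  next
    fix a b assume "a \<in> I" "b \<in> I" "le a b"
    thus "eps le a b ` Etup I le b = Etup I le a" using wd surj by blast
  qed (use ne wd in auto)
qed

end
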